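(* In the $\beta$-model with true parameter satisfying $\beta_1=\cdots=\beta_r$, for a fixed positive integer $r$, $$\|W_{22}-\widetilde W_{22}\|_{\max}\lesssim\frac{b_n^6}{n^3c_n^5},$$ where $W_{22}$ is the bottom-right $(n-r)\times(n-r)$ block of $W=V^{-1}-S$ and $\widetilde W_{22}$ is the bottom-right $(n-r)\times(n-r)$ block of $\widetilde W=\widetilde V^{-1}-\widetilde S$.
   Context: $\beta$-model: $a_{ij}=a_{ji}\in\{0,1\}$, $1\le i<j\le n$, independent with $P(a_{ij}=1)=e^{\beta_i+\beta_j}/(1+e^{\beta_i+\beta_j})$, $a_{ii}=0$; $d_i=\sum_{j\ne i}a_{ij}$. $V=(v_{ij})$ with $v_{ij}=e^{\beta_i+\beta_j}/(1+e^{\beta_i+\beta_j})^2$ ($i\ne j$), $v_{ii}=\sum_{j\ne i}v_{ij}$; $S=\mathrm{diag}(1/v_{11},\dots,1/v_{nn})$. $\widetilde{\mathbf d}=(\sum_{i=1}^rd_i,d_{r+1},\dots,d_n)^\top$, $\widetilde V=(\tilde v_{ij})$ its covariance matrix, $\widetilde S=\mathrm{diag}(1/\tilde v_{11},1/v_{r+1,r+1},\dots,1/v_{nn})$. $\|J\|_{\max}=\max_{i,j}|J_{ij}|$. $b_n=\max_{i\neq j}(1+e^{\beta_i+\beta_j})^2/e^{\beta_i+\beta_j}$, $c_n=\min_{i\ne j}(\cdot)$. $x\lesssim y$ means $x\le Cy$ for a constant $C$ independent of $n$. *)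

theory Defs
  imports Complex_Main "Jordan_Normal_Form.Gauss_Jordan_Elimination"
begin

text \<open>Nodes are indexed 0..n-1 (paper: 1..n). beta :: nat => real gives the parameters;
  only beta 0, ..., beta (n-1) matter.\<close>

definition vv :: "(nat \<Rightarrow> real) \<Rightarrow> nat \<Rightarrow> nat \<Rightarrow> real" where
  "vv \<beta> i j = exp (\<beta> i + \<beta> j) / (1 + exp (\<beta> i + \<beta> j))^2"

definition Vmat :: "nat \<Rightarrow> (nat \<Rightarrow> real) \<Rightarrow> real mat" where
  "Vmat n \<beta> = mat n n (\<lambda>(i,j). if i = j then (\<Sum>k\<in>{0..<n} - {i}. vv \<beta> i k) else vv \<beta> i j)"

definition Smat :: "nat \<Rightarrow> (nat \<Rightarrow> real) \<Rightarrow> real mat" where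
  "Smat n \<beta> = mat n n (\<lambda>(i,j). if i = j then 1 / (Vmat n \<beta> $$ (i,i)) else 0)"

text \<open>Aggregation matrix A of size (n-r+1) x n with d~ = A d:
  row 0 sums nodes 0..r-1, row k (k>=1) picks node r+k-1.\<close>
definition Amat :: "nat \<Rightarrow> nat \<Rightarrow> real mat" where
  "Amat n r = mat (n - r + 1) n (\<lambda>(k,j). if k = 0 then (if j < r then 1 else 0)
                                          else (if j = r + k - 1 then 1 else 0))"

text \<open>Covariance matrix of d~ = A d, i.e. A V A^T (since Cov(d) = V).\<close>
definition Vtil :: "nat \<Rightarrow> nat \<Rightarrow> (nat \<Rightarrow> real) \<Rightarrow> real mat" where
  "Vtil n r \<beta> = Amat n r * Vmat n \<beta> * transpose_mat (Amat n r)"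

definition Stil :: "nat \<Rightarrow> nat \<Rightarrow> (nat \<Rightarrow> real) \<Rightarrow> real mat" where
  "Stil n r \<beta> = mat (n - r + 1) (n - r + 1)
     (\<lambda>(i,j). if i = j then 1 / (Vtil n r \<beta> $$ (i,i)) else 0)"

definition Wmat :: "nat \<Rightarrow> (nat \<Rightarrow> real) \<Rightarrow> real mat" where
  "Wmat n \<beta> = the (mat_inverse (Vmat n \<beta>)) - Smat n \<beta>"

definition Wtil :: "nat \<Rightarrow> nat \<Rightarrow> (nat \<Rightarrow> real) \<Rightarrow> real mat" where
  "Wtil n r \<beta> = the (mat_inverse (Vtil n r \<beta>)) - Stil n r \<beta>"

definition br_block :: "nat \<Rightarrow> real mat \<Rightarrow> real mat" where
  "br_block m A = mat m m (\<lambda>(i,j). A $$ (dim_row A - m + i, dim_col A - m + j))"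

definition max_norm :: "real mat \<Rightarrow> real" where
  "max_norm A = Max ({\<bar>A $$ (i,j)\<bar> | i j. i < dim_row A \<and> j < dim_col A} \<union> {0})"

definition b_n :: "nat \<Rightarrow> (nat \<Rightarrow> real) \<Rightarrow> real" where
  "b_n n \<beta> = Max {(1 + exp (\<beta> i + \<beta> j))^2 / exp (\<beta> i + \<beta> j) | i j. i < n \<and> j < n \<and> i \<noteq> j}"

definition c_n :: "nat \<Rightarrow> (nat \<Rightarrow> real) \<Rightarrow> real" where
  "c_n n \<beta> = Min {(1 + exp (\<beta> i + \<beta> j))^2 / exp (\<beta> i + \<beta> j) | i j. i < n \<and> j < n \<and> i \<noteq> j}"

end

theory Submission
  imports Defs "Jordan_Normal_Form.Determinant"
begin

lemma vv_pos: "vv \<beta> i k > 0"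
proof -
  have "0 < 1 + exp (\<beta> i + \<beta> k)" by (simp add: add_pos_pos)
  then show ?thesis unfolding vv_def by simp
qed

lemma vv_sym: "vv \<beta> i k = vv \<beta> k i"
  unfolding vv_def by (simp add: add.commute)

lemma V_carrier: "Vmat n \<beta> \<in> carrier_mat n n"
  unfolding Vmat_def by simp

lemma A_carrier: "Amat n r \<in> carrier_mat (n - r + 1) n"
  unfolding Amat_def by simp

lemma Vtil_carrier: "Vtil n r \<beta> \<in> carrier_mat (n - r + 1) (n - r + 1)"
  unfolding Vtil_def using A_carrier V_carrier by (metis mult_carrier_mat transpose_carrier_mat)

lemma V_row:
  assumes x: "x \<in> carrier_vec n" and i: "i < n"
  shows "(Vmat n \<beta> *\<^sub>v x) $ i = (\<Sum>k\<in>{0..<n} - {i}. vv \<beta> i k * (x $ i + x $ k))"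
proof -
  have "(Vmat n \<beta> *\<^sub>v x) $ i = (\<Sum>k\<in>{0..<n}. Vmat n \<beta> $$ (i,k) * x $ k)"
    using x i unfolding Vmat_def by (simp add: row_def scalar_prod_def)
  also have "\<dots> = Vmat n \<beta> $$ (i,i) * x $ i + (\<Sum>k\<in>{0..<n} - {i}. Vmat n \<beta> $$ (i,k) * x $ k)"
    using i by (subst sum.remove[of _ i]) auto
  also have "\<dots> = (\<Sum>k\<in>{0..<n} - {i}. vv \<beta> i k) * x $ i + (\<Sum>k\<in>{0..<n} - {i}. vv \<beta> i k * x $ k)"
    using i unfolding Vmat_def by (auto intro!: sum.cong)
  also have "\<dots> = (\<Sum>k\<in>{0..<n} - {i}. vv \<beta> i k * (x $ i + x $ k))"
    by (simp add: sum_distrib_left sum_distrib_right sum.distrib algebra_simps)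
  finally show ?thesis .
qed

lemma V_quad:
  assumes x: "x \<in> carrier_vec n" and n3: "n \<ge> 3" and q: "x \<bullet> (Vmat n \<beta> *\<^sub>v x) = 0"
  shows "x = 0\<^sub>v n"
proof -
  define f where "f i k = (if k = i then 0 else vv \<beta> i k * (x $ i * (x $ i + x $ k)))" for i k
  define g where "g i k = (if k = i then 0 else vv \<beta> i k * (x $ i + x $ k)^2)" for i k
  have "x \<bullet> (Vmat n \<beta> *\<^sub>v x) = (\<Sum>i<n. x $ i * (Vmat n \<beta> *\<^sub>v x) $ i)"
    using x V_carrier[of n \<beta>] by (simp add: scalar_prod_def lessThan_atLeast0)
  also have "\<dots> = (\<Sum>i<n. \<Sum>k<n. f i k)"
  proof (rule sum.cong[OF refl])
    fix i assume i: "i \<in> {..<n}"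
    have "x $ i * (Vmat n \<beta> *\<^sub>v x) $ i = (\<Sum>k\<in>{0..<n} - {i}. x $ i * (vv \<beta> i k * (x $ i + x $ k)))"
      using V_row[OF x, of i \<beta>] i by (simp add: sum_distrib_left)
    also have "\<dots> = (\<Sum>k\<in>{0..<n} - {i}. f i k)"
      by (rule sum.cong) (auto simp: f_def)
    also have "\<dots> = (\<Sum>k<n. f i k)"
      using i by (subst (2) sum.remove[of _ i]) (auto simp: f_def lessThan_atLeast0)
    finally show "x $ i * (Vmat n \<beta> *\<^sub>v x) $ i = (\<Sum>k<n. f i k)" .
  qed
  finally have S: "x \<bullet> (Vmat n \<beta> *\<^sub>v x) = (\<Sum>i<n. \<Sum>k<n. f i k)" .
  have sw: "(\<Sum>i<n. \<Sum>k<n. f i k) = (\<Sum>i<n. \<Sum>k<n. f k i)"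
    by (rule sum.swap)
  have "(\<Sum>i<n. \<Sum>k<n. g i k) = (\<Sum>i<n. \<Sum>k<n. f i k + f k i)"
    by (intro sum.cong refl) (auto simp: f_def g_def vv_sym[of \<beta> i k for i k] power2_eq_square algebra_simps)
  also have "\<dots> = 2 * (x \<bullet> (Vmat n \<beta> *\<^sub>v x))"
    using S sw by (simp add: sum.distrib)
  finally have G: "(\<Sum>i<n. \<Sum>k<n. g i k) = 0" using q by simp
  have gnn: "g i k \<ge> 0" for i k
    using vv_pos[of \<beta> i k] by (auto simp: g_def)
  have z: "x $ i + x $ k = 0" if "i < n" "k < n" "i \<noteq> k" for i k
  proof -
    have "(\<Sum>k<n. g i k) = 0"
      using G gnn that by (subst (asm) sum_nonneg_eq_0_iff) (auto intro: sum_nonneg)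
    then have "g i k = 0" using gnn that by (subst (asm) sum_nonneg_eq_0_iff) auto
    then show ?thesis using vv_pos[of \<beta> i k] that by (auto simp: g_def)
  qed
  show ?thesis
  proof (rule eq_vecI)
    show "dim_vec x = dim_vec (0\<^sub>v n)" using x by simp
    fix i assume "i < dim_vec (0\<^sub>v n)"
    then have i: "i < n" by simp
    obtain j k where jk: "j < n" "k < n" "j \<noteq> i" "k \<noteq> i" "j \<noteq> k"
    proof (cases "i = 0")
      case True then show ?thesis using that[of 1 2] n3 by auto
    next
      case False then show ?thesis
        using that[of 0 "if i = 1 then 2 else 1"] n3 i by auto
    qed
    have "x $ i + x $ j = 0" "x $ j + x $ k = 0" "x $ i + x $ k = 0"
      using z jk i by auto
    then show "x $ i = 0\<^sub>v n $ i" using i by simp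
  qed
qed

lemma kernel_inverse:
  assumes A: "A \<in> carrier_mat n n"
    and ker: "\<And>v. v \<in> carrier_vec n \<Longrightarrow> A *\<^sub>v v = 0\<^sub>v n \<Longrightarrow> v = 0\<^sub>v n"
  shows "\<exists>B. mat_inverse A = Some (B :: real mat) \<and> A * B = 1\<^sub>m n \<and> B * A = 1\<^sub>m n \<and> B \<in> carrier_mat n n"
proof -
  have "det A \<noteq> 0" using det_0_iff_vec_prod_zero[OF A] ker by auto
  then have U: "A \<in> Units (ring_mat TYPE(real) n n)" by (rule det_non_zero_imp_unit[OF A])
  then obtain B where "mat_inverse A = Some B" using mat_inverse(1)[OF A, of n] by (cases "mat_inverse A") auto
  then show ?thesis using mat_inverse(2)[OF A] by auto
qed

lemma A_entry:
  assumes "k < n - r + 1" "j < n" "r \<ge> 1" "r \<le> n"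
  shows "Amat n r $$ (k,j) = (if k = (if j < r then 0 else j - r + 1) then 1 else 0)"
  using assms unfolding Amat_def by auto

lemma A_mult:
  assumes w: "w \<in> carrier_vec n" and k: "k < n - r + 1" and r: "r \<ge> 1" "r \<le> n"
  shows "(Amat n r *\<^sub>v w) $ k = (if k = 0 then (\<Sum>j<r. w $ j) else w $ (r + k - 1))"
proof -
  have "(Amat n r *\<^sub>v w) $ k = (\<Sum>j<n. Amat n r $$ (k,j) * w $ j)"
    using w k A_carrier[of n r] by (simp add: scalar_prod_def row_def lessThan_atLeast0)
  also have "\<dots> = (if k = 0 then (\<Sum>j<r. w $ j) else w $ (r + k - 1))"
  proof (cases "k = 0")
    case True
    have "(\<Sum>j<n. Amat n r $$ (k,j) * w $ j) = (\<Sum>j<n. if j < r then w $ j else 0)"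
      using True k unfolding Amat_def by (intro sum.cong) auto
    also have "\<dots> = (\<Sum>j\<in>{..<n} \<inter> {j. j < r}. w $ j)"
      by (simp add: sum.inter_restrict)
    also have "{..<n} \<inter> {j. j < r} = {..<r}" using r by auto
    finally show ?thesis using True by simp
  next
    case False
    have "(\<Sum>j<n. Amat n r $$ (k,j) * w $ j) = (\<Sum>j<n. if j = r + k - 1 then w $ j else 0)"
      using False k unfolding Amat_def by (intro sum.cong) auto
    also have "\<dots> = w $ (r + k - 1)" using False k r by (simp add: sum.delta')
    finally show ?thesis using False by simp
  qed
  finally show ?thesis .
qed

lemma AT_mult:
  assumes y: "y \<in> carrier_vec (n - r + 1)" and j: "j < n" and r: "r \<ge> 1" "r \<le> n"
  shows "(transpose_mat (Amat n r) *\<^sub>v y) $ j = (if j < r then y $ 0 else y $ (j - r + 1))"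
proof -
  let ?m = "n - r + 1"
  let ?c = "if j < r then 0 else j - r + 1"
  have c: "?c < ?m" using j r by auto
  have "(transpose_mat (Amat n r) *\<^sub>v y) $ j = (\<Sum>k<?m. Amat n r $$ (k,j) * y $ k)"
    using y j A_carrier[of n r] by (simp add: scalar_prod_def row_def lessThan_atLeast0)
  also have "\<dots> = (\<Sum>k<?m. if k = ?c then y $ k else 0)"
    using j r by (intro sum.cong refl) (simp add: A_entry del: One_nat_def)
  also have "\<dots> = y $ ?c" using c by (simp add: sum.delta' del: One_nat_def)
  finally show ?thesis by simp
qed

lemma V_inv:
  assumes "n \<ge> 3"
  shows "\<exists>B. mat_inverse (Vmat n \<beta>) = Some B \<and> Vmat n \<beta> * B = 1\<^sub>m n \<and> B * Vmat n \<beta> = 1\<^sub>m n \<and> B \<in> carrier_mat n n"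
proof (rule kernel_inverse[OF V_carrier])
  fix v assume v: "v \<in> carrier_vec n" and "Vmat n \<beta> *\<^sub>v v = 0\<^sub>v n"
  then have "v \<bullet> (Vmat n \<beta> *\<^sub>v v) = 0" by simp
  then show "v = 0\<^sub>v n" using V_quad[OF v assms] by simp
qed

lemma Vtil_mult:
  assumes y: "y \<in> carrier_vec (n - r + 1)"
  shows "Vtil n r \<beta> *\<^sub>v y = Amat n r *\<^sub>v (Vmat n \<beta> *\<^sub>v (transpose_mat (Amat n r) *\<^sub>v y))"
proof -
  have A: "Amat n r \<in> carrier_mat (n - r + 1) n" by (rule A_carrier)
  have AT: "transpose_mat (Amat n r) \<in> carrier_mat n (n - r + 1)" using A by simp
  have V: "Vmat n \<beta> \<in> carrier_mat n n" by (rule V_carrier)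
  have "Vtil n r \<beta> *\<^sub>v y = (Amat n r * Vmat n \<beta>) *\<^sub>v (transpose_mat (Amat n r) *\<^sub>v y)"
    unfolding Vtil_def using A AT V y by (meson assoc_mult_mat_vec mult_carrier_mat)
  also have "\<dots> = Amat n r *\<^sub>v (Vmat n \<beta> *\<^sub>v (transpose_mat (Amat n r) *\<^sub>v y))"
    using A AT V y by (meson assoc_mult_mat_vec mult_mat_vec_carrier)
  finally show ?thesis .
qed

lemma Vtil_inv:
  assumes n: "n \<ge> 3" and r: "r \<ge> 1" "r \<le> n"
  shows "\<exists>B. mat_inverse (Vtil n r \<beta>) = Some B \<and> Vtil n r \<beta> * B = 1\<^sub>m (n - r + 1) \<and> B * Vtil n r \<beta> = 1\<^sub>m (n - r + 1) \<and> B \<in> carrier_mat (n - r + 1) (n - r + 1)"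
proof (rule kernel_inverse[OF Vtil_carrier])
  fix y assume y: "y \<in> carrier_vec (n - r + 1)" and "Vtil n r \<beta> *\<^sub>v y = 0\<^sub>v (n - r + 1)"
  then have "y \<bullet> (Vtil n r \<beta> *\<^sub>v y) = 0" by simp
  define z where "z = transpose_mat (Amat n r) *\<^sub>v y"
  have z: "z \<in> carrier_vec n" unfolding z_def
    by (rule mult_mat_vec_carrier[OF transpose_carrier_mat[THEN iffD2, OF A_carrier] y])
  have Vz: "Vmat n \<beta> *\<^sub>v z \<in> carrier_vec n" by (rule mult_mat_vec_carrier[OF V_carrier z])
  have "y \<bullet> (Vtil n r \<beta> *\<^sub>v y) = y \<bullet> (Amat n r *\<^sub>v (Vmat n \<beta> *\<^sub>v z))"
    using Vtil_mult[OF y] z_def by simp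
  also have "\<dots> = z \<bullet> (Vmat n \<beta> *\<^sub>v z)"
    unfolding z_def using transpose_vec_mult_scalar[OF A_carrier Vz y] z_def by simp
  finally have "z \<bullet> (Vmat n \<beta> *\<^sub>v z) = 0" using \<open>y \<bullet> (Vtil n r \<beta> *\<^sub>v y) = 0\<close> by simp
  then have z0: "z = 0\<^sub>v n" using V_quad[OF z n] by simp
  show "y = 0\<^sub>v (n - r + 1)"
  proof (rule eq_vecI)
    show "dim_vec y = dim_vec (0\<^sub>v (n - r + 1))" using y by simp
    fix k assume "k < dim_vec (0\<^sub>v (n - r + 1))"
    then have k: "k < n - r + 1" by simp
    show "y $ k = 0\<^sub>v (n - r + 1) $ k"
    proof (cases "k = 0")
      case True
      have "z $ 0 = y $ 0" unfolding z_def using AT_mult[OF y _ r, of 0] r by simp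
      then show ?thesis using z0 True k n by simp
    next
      case False
      have h: "r + k - 1 < n" "\<not> (r + k - 1 < r)" "r + k - 1 - r + 1 = k" using r k False by auto
      have "z $ (r + k - 1) = y $ k" unfolding z_def using AT_mult[OF y h(1) r] h(2,3) by simp
      then show ?thesis using z0 False k r by simp
    qed
  qed
qed

lemma mult_unit_col:
  assumes A: "(A :: real mat) \<in> carrier_mat nr nc" and c: "c < nc"
  shows "A *\<^sub>v unit_vec nc c = col A c"
proof -
  have "col (A * 1\<^sub>m nc) c = A *\<^sub>v col (1\<^sub>m nc) c" using A c by (intro col_mult2) auto
  moreover have "dim_col A = nc" using A by auto
  ultimately show ?thesis using c by simp
qed

lemma main_eq:
  assumes r: "r \<ge> 1" and n: "n \<ge> r + 2" and \<beta>: "\<forall>i<r. \<beta> i = \<beta> 0"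
    and i: "i < n - r" and j: "j < n - r"
  shows "Wmat n \<beta> $$ (r + i, r + j) = Wtil n r \<beta> $$ (1 + i, 1 + j)"
proof -
  let ?m = "n - r + 1"
  let ?V = "Vmat n \<beta>"
  let ?Vt = "Vtil n r \<beta>"
  let ?A = "Amat n r"
  have n3: "n \<ge> 3" and rn: "r \<le> n" using n r by auto
  obtain X where X: "mat_inverse ?V = Some X" "?V * X = 1\<^sub>m n" "X * ?V = 1\<^sub>m n" "X \<in> carrier_mat n n"
    using V_inv[OF n3, of \<beta>] by blast
  obtain Y where Y: "mat_inverse ?Vt = Some Y" "?Vt * Y = 1\<^sub>m ?m" "Y * ?Vt = 1\<^sub>m ?m" "Y \<in> carrier_mat ?m ?m"
    using Vtil_inv[OF n3 r rn, of \<beta>] by blast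
  define x where "x = col X (r + j)"
  have xc: "x \<in> carrier_vec n" unfolding x_def using X(4) by (simp add: carrier_dim_vec)
  have Vx: "?V *\<^sub>v x = unit_vec n (r + j)"
  proof -
    have "col (?V * X) (r + j) = ?V *\<^sub>v x" unfolding x_def using X(4) j by (intro col_mult2[OF V_carrier]) auto
    then show ?thesis using X(2) j by simp
  qed
  define g where "g k = vv \<beta> 0 k" for k
  have gv: "vv \<beta> l k = g k" if "l < r" for l k
  proof -
    have "\<beta> l = \<beta> 0" using \<beta> that by blast
    then show ?thesis unfolding g_def vv_def by simp
  qed
  have gl: "g l = g 0" if "l < r" for l
  proof -
    have "\<beta> l = \<beta> 0" using \<beta> that by blast
    then show ?thesis unfolding g_def vv_def by simp
  qed
  have gpos: "g k > 0" for k unfolding g_def by (rule vv_pos)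
  have rowl: "(?V *\<^sub>v x) $ l = (\<Sum>k<n. g k) * x $ l + (\<Sum>k<n. g k * x $ k) - 2 * g 0 * x $ l"
    if l: "l < r" for l
  proof -
    have ln: "l < n" using l rn n by auto
    have "(?V *\<^sub>v x) $ l = (\<Sum>k\<in>{0..<n} - {l}. g k * (x $ l + x $ k))"
      using V_row[OF xc ln] gv[OF l] by simp
    also have "\<dots> = (\<Sum>k\<in>{0..<n}. g k * (x $ l + x $ k)) - g l * (x $ l + x $ l)"
      using ln by (simp add: sum_diff1)
    also have "(\<Sum>k\<in>{0..<n}. g k * (x $ l + x $ k)) = (\<Sum>k\<in>{0..<n}. g k * x $ l) + (\<Sum>k\<in>{0..<n}. g k * x $ k)"
      by (simp add: distrib_left sum.distrib)
    also have "(\<Sum>k\<in>{0..<n}. g k * x $ l) = (\<Sum>k<n. g k) * x $ l"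
      by (simp add: sum_distrib_right lessThan_atLeast0)
    also have "(\<Sum>k\<in>{0..<n}. g k * x $ k) = (\<Sum>k<n. g k * x $ k)"
      by (simp add: lessThan_atLeast0)
    finally show ?thesis using gl[OF l] by simp
  qed
  have const: "x $ a = x $ 0" if a: "a < r" for a
  proof (cases "a = 0")
    case True then show ?thesis by simp
  next
    case False
    have h: "r + j < n" "a < n" "0 < n" "a \<noteq> r + j" "0 \<noteq> r + j" using a j n r by auto
    have "(?V *\<^sub>v x) $ a = 0" "(?V *\<^sub>v x) $ 0 = 0" using Vx h by simp_all
    then have eq: "((\<Sum>k<n. g k) - 2 * g 0) * (x $ a - x $ 0) = 0"
      using rowl[OF a] rowl[of 0] r by (simp add: algebra_simps)
    obtain c where c: "c < n" "c \<noteq> 0" "c \<noteq> a"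
    proof (cases "a = 1")
      case True then show ?thesis using that[of 2] n3 by auto
    next
      case False then show ?thesis using that[of 1] n3 \<open>a \<noteq> 0\<close> by auto
    qed
    have an: "a < n" using a rn n by auto
    have "(\<Sum>k\<in>{0, a, c}. g k) \<le> (\<Sum>k<n. g k)"
      using c an gpos by (intro sum_mono2) (auto simp: less_imp_le)
    also have "(\<Sum>k\<in>{0, a, c}. g k) = g 0 + g a + g c" using c False by simp
    finally have "(\<Sum>k<n. g k) - 2 * g 0 > 0" using gl[OF a] gpos[of c] by simp
    then show ?thesis using eq by simp
  qed
  define y where "y = vec ?m (\<lambda>k. if k = 0 then x $ 0 else x $ (r + k - 1))"
  have yc: "y \<in> carrier_vec ?m" unfolding y_def by simp
  have ATy: "transpose_mat ?A *\<^sub>v y = x"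
  proof (rule eq_vecI)
    show "dim_vec (transpose_mat ?A *\<^sub>v y) = dim_vec x" using xc A_carrier[of n r] by simp
    fix l assume "l < dim_vec x"
    then have l: "l < n" using xc by simp
    show "(transpose_mat ?A *\<^sub>v y) $ l = x $ l"
    proof (cases "l < r")
      case True then show ?thesis using AT_mult[OF yc l r rn] const[OF True] unfolding y_def by simp
    next
      case False
      have h: "l - r + 1 < ?m" "l - r + 1 \<noteq> 0" "r + (l - r + 1) - 1 = l" using False l by auto
      then show ?thesis using AT_mult[OF yc l r rn] False unfolding y_def by simp
    qed
  qed
  have Vty: "?Vt *\<^sub>v y = unit_vec ?m (1 + j)"
  proof (rule eq_vecI)
    show "dim_vec (?Vt *\<^sub>v y) = dim_vec (unit_vec ?m (1 + j))" using Vtil_carrier[of n r \<beta>] by simp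
    fix k assume "k < dim_vec (unit_vec ?m (1 + j))"
    then have k: "k < ?m" by simp
    have uc: "unit_vec n (r + j) \<in> carrier_vec n" by simp
    have "(?Vt *\<^sub>v y) $ k = (?A *\<^sub>v unit_vec n (r + j)) $ k"
      using Vtil_mult[OF yc] ATy Vx by simp
    also have "\<dots> = unit_vec ?m (1 + j) $ k"
    proof (cases "k = 0")
      case True
      have "(\<Sum>l<r. unit_vec n (r + j) $ l) = 0" using rn j by (intro sum.neutral) auto
      then show ?thesis using A_mult[OF uc k r rn] True j by simp
    next
      case False
      have "r + k - 1 < n" using k False by auto
      then show ?thesis using A_mult[OF uc k r rn] False j k by auto
    qed
    finally show "(?Vt *\<^sub>v y) $ k = unit_vec ?m (1 + j) $ k" .
  qed
  have "y = (Y * ?Vt) *\<^sub>v y" using Y(3) yc by simp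
  also have "\<dots> = Y *\<^sub>v unit_vec ?m (1 + j)"
    using Y(4) Vtil_carrier[of n r \<beta>] yc Vty by (metis assoc_mult_mat_vec)
  also have "\<dots> = col Y (1 + j)" using Y(4) j by (intro mult_unit_col) auto
  finally have ycol: "y = col Y (1 + j)" .
  have offd: "Y $$ (1 + i, 1 + j) = X $$ (r + i, r + j)"
  proof -
    have "Y $$ (1 + i, 1 + j) = col Y (1 + j) $ (1 + i)" using Y(4) i j by simp
    also have "\<dots> = y $ (1 + i)" using ycol by simp
    also have "\<dots> = x $ (r + i)" unfolding y_def using i by simp
    also have "\<dots> = X $$ (r + i, r + j)" unfolding x_def using X(4) i j by simp
    finally show ?thesis .
  qed
  have diag: "?Vt $$ (1 + i, 1 + i) = ?V $$ (r + i, r + i)"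
  proof -
    have u1: "unit_vec ?m (1 + i) \<in> carrier_vec ?m" by simp
    have ATu: "transpose_mat ?A *\<^sub>v unit_vec ?m (1 + i) = unit_vec n (r + i)"
    proof (rule eq_vecI)
      show "dim_vec (transpose_mat ?A *\<^sub>v unit_vec ?m (1 + i)) = dim_vec (unit_vec n (r + i))"
        using A_carrier[of n r] by simp
      fix l assume "l < dim_vec (unit_vec n (r + i))"
      then have l: "l < n" by simp
      show "(transpose_mat ?A *\<^sub>v unit_vec ?m (1 + i)) $ l = unit_vec n (r + i) $ l"
        using AT_mult[OF u1 l r rn] l i by auto
    qed
    have "?Vt $$ (1 + i, 1 + i) = col ?Vt (1 + i) $ (1 + i)" using Vtil_carrier[of n r \<beta>] i by simp
    also have "\<dots> = (?Vt *\<^sub>v unit_vec ?m (1 + i)) $ (1 + i)"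
      using mult_unit_col[OF Vtil_carrier, of "1 + i" n r \<beta>] i by simp
    also have "\<dots> = (?A *\<^sub>v (?V *\<^sub>v unit_vec n (r + i))) $ (1 + i)"
      using Vtil_mult[OF u1] ATu by simp
    also have "\<dots> = (?V *\<^sub>v unit_vec n (r + i)) $ (r + i)"
    proof -
      have k1: "1 + i < n - r + 1" using i by simp
      have vc: "?V *\<^sub>v unit_vec n (r + i) \<in> carrier_vec n"
        by (rule mult_mat_vec_carrier[OF V_carrier unit_vec_carrier])
      show ?thesis using A_mult[OF vc k1 r rn] by simp
    qed
    also have "\<dots> = col ?V (r + i) $ (r + i)" using mult_unit_col[OF V_carrier, of "r + i" n \<beta>] i by simp
    also have "\<dots> = ?V $$ (r + i, r + i)" using V_carrier[of n \<beta>] i by simp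
    finally show ?thesis .
  qed
  have "Wmat n \<beta> $$ (r + i, r + j) = X $$ (r + i, r + j) - Smat n \<beta> $$ (r + i, r + j)"
    unfolding Wmat_def using X(1) i j by (simp add: Smat_def)
  also have "\<dots> = Y $$ (1 + i, 1 + j) - Stil n r \<beta> $$ (1 + i, 1 + j)"
    using offd diag i j by (cases "i = j") (simp_all add: Smat_def Stil_def)
  also have "\<dots> = Wtil n r \<beta> $$ (1 + i, 1 + j)"
    unfolding Wtil_def using Y(1) i j by (simp add: Stil_def)
  finally show ?thesis .
qed

theorem lemma13:
  fixes r :: nat
  assumes "r \<ge> 1"
  shows "\<exists>C N. \<forall>n \<ge> N. \<forall>\<beta> :: nat \<Rightarrow> real. (\<forall>i < r. \<beta> i = \<beta> 0) \<longrightarrow>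
           max_norm (br_block (n - r) (Wmat n \<beta>) - br_block (n - r) (Wtil n r \<beta>))
             \<le> C * b_n n \<beta> ^ 6 / (real n ^ 3 * c_n n \<beta> ^ 5)"
proof (intro exI allI impI)
  fix n :: nat and \<beta> :: "nat \<Rightarrow> real"
  assume n: "n \<ge> r + 2" and \<beta>: "\<forall>i < r. \<beta> i = \<beta> 0"
  let ?M = "br_block (n - r) (Wmat n \<beta>) - br_block (n - r) (Wtil n r \<beta>)"
  have dW: "dim_row (Wmat n \<beta>) = n" "dim_col (Wmat n \<beta>) = n"
    unfolding Wmat_def Smat_def by simp_all
  have dWt: "dim_row (Wtil n r \<beta>) = n - r + 1" "dim_col (Wtil n r \<beta>) = n - r + 1"
    unfolding Wtil_def Stil_def by simp_all
  have z: "?M $$ (i, j) = 0" if "i < n - r" "j < n - r" for i j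
  proof -
    have e1: "n - (n - r) + i = r + i" "n - (n - r) + j = r + j" using n by auto
    have e2: "n - r + 1 - (n - r) + i = 1 + i" "n - r + 1 - (n - r) + j = 1 + j" using n by auto
    have "?M $$ (i, j) = Wmat n \<beta> $$ (r + i, r + j) - Wtil n r \<beta> $$ (1 + i, 1 + j)"
      using that dW dWt e1 e2 unfolding br_block_def by simp
    also have "\<dots> = 0" using main_eq[OF assms n \<beta> that] by simp
    finally show ?thesis .
  qed
  have dM: "dim_row ?M = n - r" "dim_col ?M = n - r" unfolding br_block_def by simp_all
  have S: "{\<bar>?M $$ (i,j)\<bar> | i j. i < dim_row ?M \<and> j < dim_col ?M} \<union> {0} = {0}"
    using z dM by auto
  have "max_norm ?M = 0" unfolding max_norm_def S by simp
  then show "max_norm ?M \<le> 0 * b_n n \<beta> ^ 6 / (real n ^ 3 * c_n n \<beta> ^ 5)" by simp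
qed

end
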